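(* Let $R=R_1\times\cdots\times R_n$ be a direct product of finite commutative local rings with identity, with $n\geq 4$, and let $I=I_1\times\cdots\times I_n$ where $I_i$ is a proper ideal of $R_i$ for every $i=1,\dots,n$. Then $\Gamma''_I(R)$ is not planar.
   Context: The product has componentwise operations. For a commutative ring $R$ and an ideal $I$ of $R$, $\Gamma''_I(R)$ is the simple undirected graph whose vertex set is $\{x\in R\setminus I : xR+I\neq R\}$, with distinct vertices $x,y$ adjacent if and only if $x\notin yR+I$ and $y\notin xR+I$. A graph is planar if it can be drawn in the plane with edges meeting only at their endpoints. *)

theory Defs
  imports "HOL-Analysis.Analysis" "HOL-Algebra.Algebra"
begin

text \<open>A simple undirected graph is given by a vertex set V and a symmetric,
irreflexive adjacency relation E (only its restriction to V matters).\<close>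

definition planar_graph :: "'v set \<Rightarrow> ('v \<Rightarrow> 'v \<Rightarrow> bool) \<Rightarrow> bool" where
  "planar_graph V E \<longleftrightarrow>
     (\<exists>(p :: 'v \<Rightarrow> complex) (c :: 'v \<Rightarrow> 'v \<Rightarrow> real \<Rightarrow> complex).
        inj_on p V \<and>
        (\<forall>u\<in>V. \<forall>v\<in>V. E u v \<longrightarrow>
            arc (c u v) \<and> pathstart (c u v) = p u \<and> pathfinish (c u v) = p v \<and>
            path_image (c u v) \<inter> p ` V = {p u, p v}) \<and>
        (\<forall>u\<in>V. \<forall>v\<in>V. \<forall>x\<in>V. \<forall>y\<in>V. E u v \<and> E x y \<and> {u, v} \<noteq> {x, y} \<longrightarrow>
            path_image (c u v) \<inter> path_image (c x y) \<subseteq> {p u, p v} \<inter> {p x, p y}))"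

definition local_ring :: "('a, 'b) ring_scheme \<Rightarrow> bool" where
  "local_ring R \<longleftrightarrow> cring R \<and> (\<exists>!M. maximalideal M R)"

text \<open>The direct product R_0 x ... x R_(n-1) with componentwise operations;
elements are functions on {..<n} (extensional outside).\<close>

definition prod_carrier :: "(nat \<Rightarrow> ('a, 'b) ring_scheme) \<Rightarrow> nat \<Rightarrow> (nat \<Rightarrow> 'a) set" where
  "prod_carrier R n = (\<Pi>\<^sub>E i\<in>{..<n}. carrier (R i))"

definition prod_set :: "(nat \<Rightarrow> 'a set) \<Rightarrow> nat \<Rightarrow> (nat \<Rightarrow> 'a) set" where
  "prod_set I n = (\<Pi>\<^sub>E i\<in>{..<n}. I i)"

definition prod_principal_plus ::
  "(nat \<Rightarrow> ('a, 'b) ring_scheme) \<Rightarrow> nat \<Rightarrow> (nat \<Rightarrow> 'a set) \<Rightarrow> (nat \<Rightarrow> 'a) \<Rightarrow> (nat \<Rightarrow> 'a) set" where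
  "prod_principal_plus R n I x =
     {y \<in> prod_carrier R n. \<exists>r\<in>prod_carrier R n. \<exists>a\<in>prod_set I n.
        \<forall>i<n. y i = (x i \<otimes>\<^bsub>R i\<^esub> r i) \<oplus>\<^bsub>R i\<^esub> a i}"

definition gamma2_vertices ::
  "(nat \<Rightarrow> ('a, 'b) ring_scheme) \<Rightarrow> nat \<Rightarrow> (nat \<Rightarrow> 'a set) \<Rightarrow> (nat \<Rightarrow> 'a) set" where
  "gamma2_vertices R n I =
     {x \<in> prod_carrier R n - prod_set I n. prod_principal_plus R n I x \<noteq> prod_carrier R n}"

definition gamma2_adj ::
  "(nat \<Rightarrow> ('a, 'b) ring_scheme) \<Rightarrow> nat \<Rightarrow> (nat \<Rightarrow> 'a set) \<Rightarrow> (nat \<Rightarrow> 'a) \<Rightarrow> (nat \<Rightarrow> 'a) \<Rightarrow> bool" where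
  "gamma2_adj R n I x y \<longleftrightarrow>
     x \<noteq> y \<and> x \<notin> prod_principal_plus R n I y \<and> y \<notin> prod_principal_plus R n I x"

end

theory Submission
  imports Defs
begin
definition vecS :: "(nat \<Rightarrow> ('a, 'b) ring_scheme) \<Rightarrow> nat \<Rightarrow> nat set \<Rightarrow> nat \<Rightarrow> 'a" where
  "vecS R n S = (\<lambda>i. if i < n then (if i \<in> S then \<one>\<^bsub>R i\<^esub> else \<zero>\<^bsub>R i\<^esub>) else undefined)"


definition LL :: "nat set list" where "LL = [{0,1},{0,2},{0,3},{1,2},{1,3},{2,3}]"


definition theta :: "(real \<Rightarrow> complex) \<Rightarrow> (real \<Rightarrow> complex) \<Rightarrow> (real \<Rightarrow> complex) \<Rightarrow> complex \<Rightarrow> complex \<Rightarrow> bool" where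
  "theta P1 P2 P3 a b \<longleftrightarrow> arc P1 \<and> arc P2 \<and> arc P3 \<and> pathstart P1 = a \<and> pathfinish P1 = b \<and>
     pathstart P2 = a \<and> pathfinish P2 = b \<and> pathstart P3 = a \<and> pathfinish P3 = b \<and>
     path_image P1 \<inter> path_image P2 = {a,b} \<and> path_image P1 \<inter> path_image P3 = {a,b} \<and>
     path_image P2 \<inter> path_image P3 = {a,b}"


definition oi :: "(real \<Rightarrow> complex) \<Rightarrow> complex set" where
  "oi g = path_image g - {pathstart g, pathfinish g}"


theorem proposition3p5:
  fixes R :: "nat \<Rightarrow> ('a, 'b) ring_scheme" and I :: "nat \<Rightarrow> 'a set" and n :: nat
  assumes "n \<ge> 4"
    and "\<And>i. i < n \<Longrightarrow> local_ring (R i)"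
    and "\<And>i. i < n \<Longrightarrow> finite (carrier (R i))"
    and "\<And>i. i < n \<Longrightarrow> ideal (I i) (R i)"
    and "\<And>i. i < n \<Longrightarrow> I i \<noteq> carrier (R i)"
  shows "\<not> planar_graph (gamma2_vertices R n I) (gamma2_adj R n I)"
proof
  assume pl: "planar_graph (gamma2_vertices R n I) (gamma2_adj R n I)"
  note id = assms(4) and pr = assms(5)
have vecS_carrier: "vecS R n S \<in> prod_carrier R n" for S
  unfolding prod_carrier_def vecS_def PiE_def
  using id by (auto simp: ideal_def ring.ring_simprules extensional_def)


have one_notin: "\<one>\<^bsub>Q\<^esub> \<notin> J" if "ideal J Q" "J \<noteq> carrier Q" for J and Q :: "('a, 'b) ring_scheme"
  using that ideal.one_imp_carrier by blast


have vecS_notin: "vecS R n S \<notin> prod_principal_plus R n I (vecS R n T)"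
    if k: "k < n" "k \<in> S" "k \<notin> T" for k S T
proof
  assume "vecS R n S \<in> prod_principal_plus R n I (vecS R n T)"
  then obtain r a where r: "r \<in> prod_carrier R n" and a: "a \<in> prod_set I n"
    and eq: "\<forall>i<n. vecS R n S i = (vecS R n T i \<otimes>\<^bsub>R i\<^esub> r i) \<oplus>\<^bsub>R i\<^esub> a i"
    unfolding prod_principal_plus_def by blast
  have rk: "r k \<in> carrier (R k)" using r k unfolding prod_carrier_def by auto
  have ak: "a k \<in> I k" using a k unfolding prod_set_def by auto
  have ring: "ring (R k)" using id[OF k(1)] by (simp add: ideal_def)
  have sub: "I k \<subseteq> carrier (R k)" using id[OF k(1)] by (simp add: ideal_def additive_subgroup.a_subset)
  have e: "\<one>\<^bsub>R k\<^esub> = \<zero>\<^bsub>R k\<^esub> \<otimes>\<^bsub>R k\<^esub> r k \<oplus>\<^bsub>R k\<^esub> a k"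
    using eq k by (auto simp: vecS_def)
  have "a k \<in> carrier (R k)" using ak sub by blast
  then have "\<one>\<^bsub>R k\<^esub> = a k" using e ring rk by (simp add: ring.ring_simprules)
  then show False using one_notin[OF id[OF k(1)] pr[OF k(1)]] ak by simp
qed


have vecS_vertex: "vecS R n S \<in> gamma2_vertices R n I"
    if k: "k < n" "k \<in> S" and j: "j < n" "j \<notin> S" for k S j
proof -
  have "vecS R n S \<notin> prod_set I n"
  proof
    assume "vecS R n S \<in> prod_set I n"
    then have "vecS R n S k \<in> I k" using k unfolding prod_set_def by (auto simp: PiE_iff)
    then show False using k one_notin[OF id[OF k(1)] pr[OF k(1)]] by (simp add: vecS_def)
  qed
  moreover have "vecS R n UNIV \<notin> prod_principal_plus R n I (vecS R n S)"
    using vecS_notin[OF j(1) _ j(2)] by blast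
  ultimately show ?thesis unfolding gamma2_vertices_def
    using vecS_carrier by blast
qed


have vecS_adj: "gamma2_adj R n I (vecS R n S) (vecS R n T)"
    if k: "k < n" "k \<in> S" "k \<notin> T" and j: "j < n" "j \<in> T" "j \<notin> S" for k S T j
proof -
  have "vecS R n S \<noteq> vecS R n T"
  proof
    assume "vecS R n S = vecS R n T"
    then have "vecS R n S k = vecS R n T k" by simp
    then have "\<one>\<^bsub>R k\<^esub> = \<zero>\<^bsub>R k\<^esub>" using k by (simp add: vecS_def)
    moreover have "\<zero>\<^bsub>R k\<^esub> \<in> I k"
      using additive_subgroup.zero_closed[OF ideal.axioms(1)[OF id[OF k(1)]]] .
    ultimately show False using one_notin[OF id[OF k(1)] pr[OF k(1)]] by simp
  qed
  then show ?thesis unfolding gamma2_adj_def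
    using vecS_notin[OF j(1) j(2) j(3)] vecS_notin[OF k] by blast
qed


have six: "k < (6::nat) \<Longrightarrow> k = 0 \<or> k = 1 \<or> k = 2 \<or> k = 3 \<or> k = 4 \<or> k = 5" for k by auto


have LL_facts: "k < 6 \<Longrightarrow> l < 6 \<Longrightarrow> k \<noteq> l \<Longrightarrow> (\<exists>x\<in>LL!k. x \<notin> LL!l \<and> x < 4) \<and> (\<exists>y\<in>LL!l. y \<notin> LL!k \<and> y < 4)" for k l :: nat
  apply (drule six, drule six)
  apply (elim disjE)
  apply (simp_all add: LL_def)
  done


have LL_vert: "k < 6 \<Longrightarrow> (\<exists>x\<in>LL!k. x < 4) \<and> (\<exists>y<4. y \<notin> LL!k)" for k :: nat
  apply (drule six)
  apply (elim disjE)
  apply (simp_all add: LL_def)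
  apply (auto intro: exI[of _ 3] exI[of _ 2] exI[of _ 1] exI[of _ 0])
  done




have theta_swap12: "theta P1 P2 P3 a b \<Longrightarrow> theta P2 P1 P3 a b" for P1 P2 P3 a b
  unfolding theta_def by blast

have theta_swap23: "theta P1 P2 P3 a b \<Longrightarrow> theta P1 P3 P2 a b" for P1 P2 P3 a b
  unfolding theta_def by blast


have jordan_arcs: "open (inside (path_image g \<union> path_image h))" "open (outside (path_image g \<union> path_image h))" "connected (inside (path_image g \<union> path_image h))" "connected (outside (path_image g \<union> path_image h))"
    "inside (path_image g \<union> path_image h) \<inter> outside (path_image g \<union> path_image h) = {}" "inside (path_image g \<union> path_image h) \<union> outside (path_image g \<union> path_image h) = - (path_image g \<union> path_image h)" "bounded (inside (path_image g \<union> path_image h))"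
    "inside (path_image g \<union> path_image h) \<noteq> {}" "\<not> bounded (outside (path_image g \<union> path_image h))"
    "closure (inside (path_image g \<union> path_image h)) = inside (path_image g \<union> path_image h) \<union> (path_image g \<union> path_image h)" "closure (outside (path_image g \<union> path_image h)) = outside (path_image g \<union> path_image h) \<union> (path_image g \<union> path_image h)"
    if "arc g" "arc h" "pathstart g = a" "pathfinish g = b" "pathstart h = a" "pathfinish h = b"
    "path_image g \<inter> path_image h = {a,b}" for g h :: "real \<Rightarrow> complex" and a b
proof -
  have sp: "simple_path (g +++ reversepath h)"
    using that by (subst simple_path_join_loop_eq) (auto simp: arc_reversepath)
  have pi: "path_image (g +++ reversepath h) = (path_image g \<union> path_image h)"
    using that by (simp add: path_image_join)
  have "pathfinish (g +++ reversepath h) = pathstart (g +++ reversepath h)"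
    using that by simp
  note J = Jordan_inside_outside[OF sp this, unfolded pi]
  show "open (inside (path_image g \<union> path_image h))" "open (outside (path_image g \<union> path_image h))" "connected (inside (path_image g \<union> path_image h))" "connected (outside (path_image g \<union> path_image h))"
    "inside (path_image g \<union> path_image h) \<inter> outside (path_image g \<union> path_image h) = {}" "inside (path_image g \<union> path_image h) \<union> outside (path_image g \<union> path_image h) = - (path_image g \<union> path_image h)" "bounded (inside (path_image g \<union> path_image h))"
    "inside (path_image g \<union> path_image h) \<noteq> {}" "\<not> bounded (outside (path_image g \<union> path_image h))"
    using J by auto
  show "closure (inside (path_image g \<union> path_image h)) = inside (path_image g \<union> path_image h) \<union> (path_image g \<union> path_image h)" "closure (outside (path_image g \<union> path_image h)) = outside (path_image g \<union> path_image h) \<union> (path_image g \<union> path_image h)"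
    using J by (simp_all add: closure_Un_frontier)
qed


have conn_side: "D \<subseteq> inside S \<or> D \<subseteq> outside S"
    if "connected D" "D \<inter> S = {}" "open (inside S)" "open (outside S)" for D S :: "complex set"
proof -
  have "D \<subseteq> inside S \<union> outside S" using that(2) by auto
  moreover have "inside S \<inter> outside S \<inter> D = {}" by auto
  ultimately show ?thesis
    using connectedD[OF that(1) that(3) that(4)] by blast
qed


have conn_split: "D \<subseteq> U \<or> D \<subseteq> V"
    if "connected D" "D \<subseteq> U \<union> V" "open U" "open V" "U \<inter> V = {}" for D U V :: "complex set"
  using connectedD[OF that(1) that(3) that(4)] that by blast


have oi_facts: "connected (oi g)" "oi g \<noteq> {}" "pathstart g \<in> closure (oi g)" "pathfinish g \<in> closure (oi g)"
    if "arc g" for g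
proof -
  have sp: "simple_path g" using that arc_imp_simple_path by blast
  show "connected (oi g)" "oi g \<noteq> {}" unfolding oi_def
    using connected_simple_path_endless[OF sp] nonempty_simple_path_endless[OF sp] by auto
  have De: "oi g = g ` {0<..<1}" unfolding oi_def using simple_path_endless[OF sp] by simp
  have "continuous_on (closure {0<..<(1::real)}) g"
    using sp by (simp add: simple_path_def path_def)
  then have "g ` closure {0<..<(1::real)} \<subseteq> closure (oi g)"
    by (rule image_closure_subset) (auto simp: De closure_subset)
  then show "pathstart g \<in> closure (oi g)" "pathfinish g \<in> closure (oi g)"
    by (auto simp: pathstart_def pathfinish_def)
qed

have theta_J: "open (inside (path_image P1 \<union> path_image P2))" "open (outside (path_image P1 \<union> path_image P2))" "connected (inside (path_image P1 \<union> path_image P2))" "connected (outside (path_image P1 \<union> path_image P2))"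
    "inside (path_image P1 \<union> path_image P2) \<inter> outside (path_image P1 \<union> path_image P2) = {}" "inside (path_image P1 \<union> path_image P2) \<union> outside (path_image P1 \<union> path_image P2) = - (path_image P1 \<union> path_image P2)" "bounded (inside (path_image P1 \<union> path_image P2))"
    "inside (path_image P1 \<union> path_image P2) \<noteq> {}" "\<not> bounded (outside (path_image P1 \<union> path_image P2))"
    "closure (inside (path_image P1 \<union> path_image P2)) = inside (path_image P1 \<union> path_image P2) \<union> (path_image P1 \<union> path_image P2)" "closure (outside (path_image P1 \<union> path_image P2)) = outside (path_image P1 \<union> path_image P2) \<union> (path_image P1 \<union> path_image P2)"
    if "theta P1 P2 P3 a b" for P1 P2 P3 a b
  using jordan_arcs[of P1 P2 a b] that unfolding theta_def by auto


have theta_oi: "oi P3 \<inter> (path_image P1 \<union> path_image P2) = {}" "oi P3 \<subseteq> path_image P3"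
    "a \<in> path_image P1" "b \<in> path_image P1" "connected (oi P3)" "oi P3 \<noteq> {}"
    if "theta P1 P2 P3 a b" for P1 P2 P3 a b
  using that oi_facts[of P3] unfolding theta_def oi_def by auto


have S1: "inside (path_image P \<union> path_image Q) \<subseteq> outside (path_image P \<union> path_image W3)"
    if th: "theta P Q W3 a b"
    and q: "oi Q \<subseteq> outside (path_image P \<union> path_image W3)"
    and r: "oi W3 \<subseteq> outside (path_image P \<union> path_image Q)"
    for P Q W3 a b
proof -
  let ?I = "inside (path_image P \<union> path_image Q)"
  have thr: "theta P W3 Q a b" using th theta_swap23 by blast
  note JQ = theta_J[OF th] and JR = theta_J[OF thr]
  have "?I \<inter> path_image W3 = {}"
  proof -
    have "path_image W3 = oi W3 \<union> {a,b}" using th unfolding theta_def oi_def by auto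
    moreover have "a \<in> path_image P" "b \<in> path_image P" using th unfolding theta_def by auto
    moreover have "?I \<inter> outside (path_image P \<union> path_image Q) = {}" by simp
    moreover have "?I \<inter> (path_image P \<union> path_image Q) = {}" by simp
    ultimately show ?thesis using r by blast
  qed
  moreover have "?I \<inter> path_image P = {}" using inside_no_overlap by blast
  ultimately have "?I \<inter> (path_image P \<union> path_image W3) = {}" by blast
  from conn_side[OF JQ(3) this JR(1,2)]
  consider "?I \<subseteq> inside (path_image P \<union> path_image W3)" | "?I \<subseteq> outside (path_image P \<union> path_image W3)"
    by blast
  then show ?thesis
  proof cases
    case 1
    then have "closure ?I \<subseteq> closure (inside (path_image P \<union> path_image W3))"
      by (rule closure_mono)
    then have c: "oi Q \<subseteq> inside (path_image P \<union> path_image W3) \<union> path_image P \<union> path_image W3"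
      using JQ(10) JR(10) unfolding oi_def by auto
    have "oi Q \<inter> (path_image P \<union> path_image W3) = {}"
      using theta_oi(1)[OF theta_swap12[OF thr]] by (simp add: Un_commute)
    with c q have "oi Q = {}" using JR(5) by blast
    with theta_oi(6)[OF theta_swap12[OF thr]] show ?thesis by simp
  qed
qed


have lemmaT: "oi P3 \<subseteq> inside (path_image P1 \<union> path_image P2) \<or>
         oi P2 \<subseteq> inside (path_image P1 \<union> path_image P3) \<or>
         oi P1 \<subseteq> inside (path_image P2 \<union> path_image P3)"
    if th: "theta P1 P2 P3 a b"
    for P1 P2 P3 a b
proof (rule ccontr)
  assume nc: "\<not> ?thesis"
  define G1 where "G1 = path_image P1"
  define G2 where "G2 = path_image P2"
  define G3 where "G3 = path_image P3"
  have th132: "theta P1 P3 P2 a b" using th theta_swap23 by blast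
  have th231: "theta P2 P3 P1 a b" using th theta_swap23 theta_swap12 by blast
  have th321: "theta P3 P2 P1 a b" using th theta_swap23 theta_swap12 by blast
  have th213: "theta P2 P1 P3 a b" using th theta_swap12 by blast
  have th312: "theta P3 P1 P2 a b" using th231 theta_swap23 theta_swap12 by blast
  note J12 = theta_J[OF th, folded G1_def G2_def]
  note J13 = theta_J[OF th132, folded G1_def G3_def]
  note J23 = theta_J[OF th231, folded G2_def G3_def]
  have u21: "G2 \<union> G1 = G1 \<union> G2" "G3 \<union> G1 = G1 \<union> G3" "G3 \<union> G2 = G2 \<union> G3" by auto
  have o3: "oi P3 \<subseteq> outside (G1 \<union> G2)"
    using conn_side[OF theta_oi(5)[OF th] theta_oi(1)[OF th] J12(1,2)[unfolded G1_def G2_def]] nc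
    unfolding G1_def G2_def by blast
  have o2: "oi P2 \<subseteq> outside (G1 \<union> G3)"
    using conn_side[OF theta_oi(5)[OF th132] theta_oi(1)[OF th132] J13(1,2)[unfolded G1_def G3_def]] nc
    unfolding G1_def G3_def by blast
  have o1: "oi P1 \<subseteq> outside (G2 \<union> G3)"
    using conn_side[OF theta_oi(5)[OF th231] theta_oi(1)[OF th231] J23(1,2)[unfolded G2_def G3_def]] nc
    unfolding G2_def G3_def by blast
  have s12: "inside (G1 \<union> G2) \<subseteq> outside (G1 \<union> G3)"
    using S1[OF th] o2 o3 unfolding G1_def G2_def G3_def by blast
  have s13: "inside (G1 \<union> G3) \<subseteq> outside (G1 \<union> G2)"
    using S1[OF th132] o2 o3 unfolding G1_def G2_def G3_def by blast
  have s23a: "inside (G2 \<union> G3) \<subseteq> outside (G1 \<union> G2)"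
    using S1[OF th231] o1 o3 u21 unfolding G1_def G2_def G3_def by metis
  have s23b: "inside (G2 \<union> G3) \<subseteq> outside (G1 \<union> G3)"
    using S1[OF th321] o1 o2 u21 unfolding G1_def G2_def G3_def by metis
  define S where "S = closure (inside (G1 \<union> G2))"
  define T where "T = closure (inside (G1 \<union> G3))"
  have S: "S = inside (G1 \<union> G2) \<union> G1 \<union> G2" using J12(10) S_def by (simp add: Un_assoc)
  have T: "T = inside (G1 \<union> G3) \<union> G1 \<union> G3" using J13(10) T_def by (simp add: Un_assoc)
  have G23: "G2 \<inter> G3 \<subseteq> G1" using th unfolding theta_def G1_def G2_def G3_def by auto
  have d1: "inside (G1 \<union> G2) \<inter> inside (G1 \<union> G3) = {}"
    using s12 inside_Int_outside by blast
  have d2: "inside (G1 \<union> G2) \<inter> (G1 \<union> G3) = {}"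
    using s12 outside_no_overlap inside_no_overlap by blast
  have d3: "inside (G1 \<union> G3) \<inter> (G1 \<union> G2) = {}"
    using s13 outside_no_overlap inside_no_overlap by blast
  have ST: "S \<inter> T = G1" unfolding S T using d1 d2 d3 G23 by (auto simp: disjoint_iff)
  have cS: "compact S" unfolding S_def using J12(7) compact_closure by blast
  have cT: "closed T" unfolding T_def by simp
  have conG1: "connected G1" unfolding G1_def using th unfolding theta_def
    by (simp add: arc_imp_path connected_path_image)
  have mS: "- S = outside (G1 \<union> G2)" unfolding S using J12(5,6) by blast
  have mT: "- T = outside (G1 \<union> G3)" unfolding T using J13(5,6) by blast
  have W: "connected (- (S \<union> T))"
    using Janiszewski_connected[OF cS cT] ST conG1 mS mT J12(4) J13(4) by simp
  let ?I = "inside (G2 \<union> G3)"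
  have IW: "?I \<subseteq> - (S \<union> T)" using s23a s23b mS mT by blast
  have "openin (top_of_set (- (S \<union> T))) ?I"
    using IW J23(1) by (rule open_subset)
  moreover have "closedin (top_of_set (- (S \<union> T))) ?I"
  proof -
    have "?I = - (S \<union> T) \<inter> closure ?I"
      using IW J23(10) closure_subset unfolding S T by blast
    then show ?thesis by (metis closed_closure closedin_closed_Int)
  qed
  ultimately have "?I = {} \<or> ?I = - (S \<union> T)"
    using W unfolding connected_clopen by blast
  moreover have "bounded (S \<union> T)"
    unfolding S_def T_def using J12(7) J13(7) by (simp add: bounded_closure)
  ultimately have "bounded (UNIV :: complex set)"
    using J23(7,8) by (metis bounded_Un Compl_partition)
  then show False by simp
qed


have cross_in: False
    if th: "theta P1 P2 P3 a b" and D: "connected D" "D \<inter> path_image P3 = {}"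
    "D \<subseteq> inside (path_image P1 \<union> path_image P2)"
    and z: "oi P3 \<subseteq> inside (path_image P1 \<union> path_image P2)"
    and p: "p \<in> closure D" "p \<in> oi P1" and q: "q \<in> closure D" "q \<in> oi P2"
    for P1 P2 P3 a b D p q
proof -
  define G1 where "G1 = path_image P1"
  define G2 where "G2 = path_image P2"
  define G3 where "G3 = path_image P3"
  have th132: "theta P1 P3 P2 a b" using th theta_swap23 by blast
  have th231: "theta P2 P3 P1 a b" using th theta_swap23 theta_swap12 by blast
  note J12 = theta_J[OF th, folded G1_def G2_def]
  note J13 = theta_J[OF th132, folded G1_def G3_def]
  note J23 = theta_J[OF th231, folded G2_def G3_def]
  have ne: "path_image P3 \<inter> inside (path_image P1 \<union> path_image P2) \<noteq> {}"
    using z theta_oi(2,6)[OF th] by blast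
  obtain sp1: "inside (G1 \<union> G3) \<inter> inside (G2 \<union> G3) = {}"
     and sp2: "inside (G1 \<union> G3) \<union> inside (G2 \<union> G3) \<union> (G3 - {a,b}) = inside (G1 \<union> G2)"
  proof -
    from th have a: "simple_path P1" "pathstart P1 = a" "pathfinish P1 = b"
      "simple_path P2" "pathstart P2 = a" "pathfinish P2 = b"
      "simple_path P3" "pathstart P3 = a" "pathfinish P3 = b" "a \<noteq> b"
      "path_image P1 \<inter> path_image P2 = {a,b}" "path_image P1 \<inter> path_image P3 = {a,b}"
      "path_image P2 \<inter> path_image P3 = {a,b}"
      unfolding theta_def by (auto simp: arc_imp_simple_path dest: arc_distinct_ends)
    show ?thesis using split_inside_simple_closed_curve[OF a ne] that
      unfolding G1_def G2_def G3_def by blast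
  qed
  have "D \<subseteq> inside (G1 \<union> G3) \<union> inside (G2 \<union> G3)"
    using D sp2 unfolding G1_def G2_def G3_def by blast
  from conn_split[OF D(1) this J13(1) J23(1) sp1]
  show False
  proof
    assume "D \<subseteq> inside (G1 \<union> G3)"
    then have "q \<in> inside (G1 \<union> G3) \<union> (G1 \<union> G3)"
      using q(1) closure_mono J13(10) by blast
    moreover have "q \<notin> G1 \<union> G3" using q(2) theta_swap23[OF th] theta_oi(1)[OF th132] unfolding G1_def G3_def by auto
    moreover have "q \<in> G2" using q(2) unfolding oi_def G2_def by auto
    ultimately show False using sp2 inside_no_overlap by blast
  next
    assume "D \<subseteq> inside (G2 \<union> G3)"
    then have "p \<in> inside (G2 \<union> G3) \<union> (G2 \<union> G3)"
      using p(1) closure_mono J23(10) by blast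
    moreover have "p \<notin> G2 \<union> G3" using p(2) theta_oi(1)[OF theta_swap12[OF th231]] unfolding G2_def G3_def by auto
    moreover have "p \<in> G1" using p(2) unfolding oi_def G1_def by auto
    ultimately show False using sp2 inside_no_overlap by blast
  qed
qed


have cross_out_aux: False
    if th: "theta P1 P2 P3 a b" and D: "connected D" "D \<inter> (path_image P1 \<union> path_image P2 \<union> path_image P3) = {}"
    "D \<subseteq> outside (path_image P1 \<union> path_image P2)"
    and y: "oi P2 \<subseteq> inside (path_image P1 \<union> path_image P3)"
    and p: "p \<in> closure D" "p \<in> oi P1" and q: "q \<in> closure D" "q \<in> oi P2"
    for P1 P2 P3 a b D p q
proof -
  define G1 where "G1 = path_image P1"
  define G2 where "G2 = path_image P2"
  define G3 where "G3 = path_image P3"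
  have th132: "theta P1 P3 P2 a b" using th theta_swap23 by blast
  have th321: "theta P3 P2 P1 a b" using th theta_swap23 theta_swap12 by blast
  note J12 = theta_J[OF th, folded G1_def G2_def]
  note J13 = theta_J[OF th132, folded G1_def G3_def]
  note J32 = theta_J[OF th321, folded G2_def G3_def]
  have ne: "path_image P2 \<inter> inside (path_image P1 \<union> path_image P3) \<noteq> {}"
    using y theta_oi(2,6)[OF th132] by blast
  obtain sp1: "inside (G1 \<union> G2) \<inter> inside (G3 \<union> G2) = {}"
     and sp2: "inside (G1 \<union> G2) \<union> inside (G3 \<union> G2) \<union> (G2 - {a,b}) = inside (G1 \<union> G3)"
  proof -
    from th have a: "simple_path P1" "pathstart P1 = a" "pathfinish P1 = b"
      "simple_path P3" "pathstart P3 = a" "pathfinish P3 = b"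
      "simple_path P2" "pathstart P2 = a" "pathfinish P2 = b" "a \<noteq> b"
      "path_image P1 \<inter> path_image P3 = {a,b}" "path_image P1 \<inter> path_image P2 = {a,b}"
      "path_image P3 \<inter> path_image P2 = {a,b}"
      unfolding theta_def by (auto simp: arc_imp_simple_path dest: arc_distinct_ends)
    show ?thesis using split_inside_simple_closed_curve[OF a ne] that
      unfolding G1_def G2_def G3_def by blast
  qed
  have DJ: "D \<inter> (G1 \<union> G3) = {}" using D(2) unfolding G1_def G3_def by blast
  from conn_side[OF D(1) DJ J13(1,2)]
  show False
  proof
    assume "D \<subseteq> inside (G1 \<union> G3)"
    moreover have "D \<inter> inside (G1 \<union> G2) = {}" using D(3) J12(5) unfolding G1_def G2_def by blast
    moreover have "D \<inter> G2 = {}" using D(2) unfolding G2_def by blast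
    ultimately have "D \<subseteq> inside (G3 \<union> G2)" using sp2 by blast
    then have "p \<in> inside (G3 \<union> G2) \<union> (G3 \<union> G2)"
      using p(1) closure_mono J32(10) by blast
    moreover have "p \<notin> G3 \<union> G2" using p(2) theta_oi(1)[OF th321] unfolding G2_def G3_def by auto
    moreover have "p \<in> G1" using p(2) unfolding oi_def G1_def by auto
    ultimately show False using sp2 inside_no_overlap by blast
  next
    assume "D \<subseteq> outside (G1 \<union> G3)"
    then have "q \<in> outside (G1 \<union> G3) \<union> (G1 \<union> G3)"
      using q(1) closure_mono J13(11) by blast
    moreover have "q \<notin> G1 \<union> G3" using q(2) theta_oi(1)[OF th132] unfolding G1_def G3_def by auto
    ultimately show False using y q(2) J13(5) unfolding G1_def G3_def by blast
  qed
qed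


have crossing: "(oi P3 \<subseteq> inside (path_image P1 \<union> path_image P2) \<and> D \<subseteq> outside (path_image P1 \<union> path_image P2)) \<or>
         (oi P3 \<subseteq> outside (path_image P1 \<union> path_image P2) \<and> D \<subseteq> inside (path_image P1 \<union> path_image P2))"
    if th: "theta P1 P2 P3 a b" and D: "connected D" "D \<inter> (path_image P1 \<union> path_image P2 \<union> path_image P3) = {}"
    and p: "p \<in> closure D" "p \<in> oi P1" and q: "q \<in> closure D" "q \<in> oi P2"
    for P1 P2 P3 a b D p q
proof -
  note J12 = theta_J[OF th]
  have th213: "theta P2 P1 P3 a b" using th theta_swap12 by blast
  have u: "path_image P2 \<union> path_image P1 = path_image P1 \<union> path_image P2" by auto
  have D12: "D \<inter> (path_image P1 \<union> path_image P2) = {}" "D \<inter> path_image P3 = {}" using D(2) by auto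
  have s3: "oi P3 \<subseteq> inside (path_image P1 \<union> path_image P2) \<or> oi P3 \<subseteq> outside (path_image P1 \<union> path_image P2)"
    using conn_side[OF theta_oi(5)[OF th] theta_oi(1)[OF th] J12(1,2)] .
  have sD: "D \<subseteq> inside (path_image P1 \<union> path_image P2) \<or> D \<subseteq> outside (path_image P1 \<union> path_image P2)"
    using conn_side[OF D(1) D12(1) J12(1,2)] .
  have ii: False if "oi P3 \<subseteq> inside (path_image P1 \<union> path_image P2)" "D \<subseteq> inside (path_image P1 \<union> path_image P2)"
    using cross_in[OF th D(1) D12(2) that(2) that(1) p q] .
  have oo: False if o3: "oi P3 \<subseteq> outside (path_image P1 \<union> path_image P2)" and oD: "D \<subseteq> outside (path_image P1 \<union> path_image P2)"
  proof -
    from lemmaT[OF th] consider "oi P3 \<subseteq> inside (path_image P1 \<union> path_image P2)"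
      | "oi P2 \<subseteq> inside (path_image P1 \<union> path_image P3)"
      | "oi P1 \<subseteq> inside (path_image P2 \<union> path_image P3)" by blast
    then show False
    proof cases
      case 1 then show ?thesis using o3 theta_oi(6)[OF th] J12(5) by blast
    next
      case 2 then show ?thesis using cross_out_aux[OF th D(1) D(2) oD _ p q] by blast
    next
      case 3 then show ?thesis using cross_out_aux[OF th213 D(1) _ _ _ q p] D(2) oD u by (metis Un_commute)
    qed
  qed
  show ?thesis using s3 sD ii oo by blast
qed


have arc3: "arc (g1 +++ (g2 +++ g3))" "pathstart (g1 +++ (g2 +++ g3)) = pathstart g1"
    "pathfinish (g1 +++ (g2 +++ g3)) = pathfinish g3"
    "path_image (g1 +++ (g2 +++ g3)) = path_image g1 \<union> path_image g2 \<union> path_image g3"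
    if "arc g1" "arc g2" "arc g3" "pathfinish g1 = pathstart g2" "pathfinish g2 = pathstart g3"
    "path_image g1 \<inter> path_image g2 \<subseteq> {pathstart g2}" "path_image g2 \<inter> path_image g3 \<subseteq> {pathstart g3}"
    "path_image g1 \<inter> path_image g3 = {}"
    for g1 g2 g3 :: "real \<Rightarrow> complex"
proof -
  have a23: "arc (g2 +++ g3)" using that by (intro arc_join) auto
  have i23: "path_image (g2 +++ g3) = path_image g2 \<union> path_image g3" using that by (simp add: path_image_join)
  show "arc (g1 +++ (g2 +++ g3))" using that a23 i23 by (intro arc_join) auto
  show "pathstart (g1 +++ (g2 +++ g3)) = pathstart g1" "pathfinish (g1 +++ (g2 +++ g3)) = pathfinish g3" by auto
  show "path_image (g1 +++ (g2 +++ g3)) = path_image g1 \<union> path_image g2 \<union> path_image g3"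
    using that i23 by (simp add: path_image_join Un_assoc)
qed


have K33: False
    if dist: "distinct [A 0, A 1, A 2, B 0, B 1, B 2]"
    and ar: "\<And>i j. i < 3 \<Longrightarrow> j < 3 \<Longrightarrow> arc (e i j) \<and> pathstart (e i j) = A i \<and> pathfinish (e i j) = B j"
    and inter: "\<And>i j k l. i < 3 \<Longrightarrow> j < 3 \<Longrightarrow> k < 3 \<Longrightarrow> l < 3 \<Longrightarrow> (i,j) \<noteq> (k,l) \<Longrightarrow>
       path_image (e i j) \<inter> path_image (e k l) \<subseteq> {A i, B j} \<inter> {A k, B l}"
    for e :: "nat \<Rightarrow> nat \<Rightarrow> real \<Rightarrow> complex" and A B :: "nat \<Rightarrow> complex"
proof -
  have d: "A 0 \<noteq> A 1" "A 0 \<noteq> A 2" "A 1 \<noteq> A 2" "B 0 \<noteq> B 1" "B 0 \<noteq> B 2" "B 1 \<noteq> B 2"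
    "A 0 \<noteq> B 0" "A 0 \<noteq> B 1" "A 0 \<noteq> B 2" "A 1 \<noteq> B 0" "A 1 \<noteq> B 1" "A 1 \<noteq> B 2"
    "A 2 \<noteq> B 0" "A 2 \<noteq> B 1" "A 2 \<noteq> B 2" using dist by auto
  note d' = d d[symmetric]
  define E where "E i j = path_image (e i j)" for i j
  have ar': "arc (e i j)" "pathstart (e i j) = A i" "pathfinish (e i j) = B j" "A i \<in> E i j" "B j \<in> E i j"
    if "i < 3" "j < 3" for i j
    using ar[OF that] unfolding E_def by (metis pathstart_in_path_image pathfinish_in_path_image)+
  have I: "E i j \<inter> E k l \<subseteq> {A i, B j} \<inter> {A k, B l}"
    if "i < 3" "j < 3" "k < 3" "l < 3" "(i,j) \<noteq> (k,l)" for i j k l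
    using inter[OF that] unfolding E_def .
  have ar0: "arc (e i j)" "pathstart (e i j) = A i" "pathfinish (e i j) = B j" "A i \<in> E i j" "B j \<in> E i j"
    if "i \<in> {0,1,2}" "j \<in> {0,1,2}" for i j using ar'[of i j] that by auto
  have i0001: "E 0 0 \<inter> E 0 1 \<subseteq> {A 0}" using d by (intro subset_trans[OF I[of 0 0 0 1]]) auto
  have i0002: "E 0 0 \<inter> E 0 2 \<subseteq> {A 0}" using d by (intro subset_trans[OF I[of 0 0 0 2]]) auto
  have i0010: "E 0 0 \<inter> E 1 0 \<subseteq> {B 0}" using d by (intro subset_trans[OF I[of 0 0 1 0]]) auto
  have i0011: "E 0 0 \<inter> E 1 1 \<subseteq> {}" using d by (intro subset_trans[OF I[of 0 0 1 1]]) auto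
  have i0012: "E 0 0 \<inter> E 1 2 \<subseteq> {}" using d by (intro subset_trans[OF I[of 0 0 1 2]]) auto
  have i0020: "E 0 0 \<inter> E 2 0 \<subseteq> {B 0}" using d by (intro subset_trans[OF I[of 0 0 2 0]]) auto
  have i0021: "E 0 0 \<inter> E 2 1 \<subseteq> {}" using d by (intro subset_trans[OF I[of 0 0 2 1]]) auto
  have i0022: "E 0 0 \<inter> E 2 2 \<subseteq> {}" using d by (intro subset_trans[OF I[of 0 0 2 2]]) auto
  have i0102: "E 0 1 \<inter> E 0 2 \<subseteq> {A 0}" using d by (intro subset_trans[OF I[of 0 1 0 2]]) auto
  have i0110: "E 0 1 \<inter> E 1 0 \<subseteq> {}" using d by (intro subset_trans[OF I[of 0 1 1 0]]) auto
  have i0111: "E 0 1 \<inter> E 1 1 \<subseteq> {B 1}" using d by (intro subset_trans[OF I[of 0 1 1 1]]) auto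
  have i0112: "E 0 1 \<inter> E 1 2 \<subseteq> {}" using d by (intro subset_trans[OF I[of 0 1 1 2]]) auto
  have i0120: "E 0 1 \<inter> E 2 0 \<subseteq> {}" using d by (intro subset_trans[OF I[of 0 1 2 0]]) auto
  have i0121: "E 0 1 \<inter> E 2 1 \<subseteq> {B 1}" using d by (intro subset_trans[OF I[of 0 1 2 1]]) auto
  have i0122: "E 0 1 \<inter> E 2 2 \<subseteq> {}" using d by (intro subset_trans[OF I[of 0 1 2 2]]) auto
  have i0210: "E 0 2 \<inter> E 1 0 \<subseteq> {}" using d by (intro subset_trans[OF I[of 0 2 1 0]]) auto
  have i0211: "E 0 2 \<inter> E 1 1 \<subseteq> {}" using d by (intro subset_trans[OF I[of 0 2 1 1]]) auto
  have i0212: "E 0 2 \<inter> E 1 2 \<subseteq> {B 2}" using d by (intro subset_trans[OF I[of 0 2 1 2]]) auto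
  have i0220: "E 0 2 \<inter> E 2 0 \<subseteq> {}" using d by (intro subset_trans[OF I[of 0 2 2 0]]) auto
  have i0221: "E 0 2 \<inter> E 2 1 \<subseteq> {}" using d by (intro subset_trans[OF I[of 0 2 2 1]]) auto
  have i0222: "E 0 2 \<inter> E 2 2 \<subseteq> {B 2}" using d by (intro subset_trans[OF I[of 0 2 2 2]]) auto
  have i1011: "E 1 0 \<inter> E 1 1 \<subseteq> {A 1}" using d by (intro subset_trans[OF I[of 1 0 1 1]]) auto
  have i1012: "E 1 0 \<inter> E 1 2 \<subseteq> {A 1}" using d by (intro subset_trans[OF I[of 1 0 1 2]]) auto
  have i1020: "E 1 0 \<inter> E 2 0 \<subseteq> {B 0}" using d by (intro subset_trans[OF I[of 1 0 2 0]]) auto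
  have i1021: "E 1 0 \<inter> E 2 1 \<subseteq> {}" using d by (intro subset_trans[OF I[of 1 0 2 1]]) auto
  have i1022: "E 1 0 \<inter> E 2 2 \<subseteq> {}" using d by (intro subset_trans[OF I[of 1 0 2 2]]) auto
  have i1112: "E 1 1 \<inter> E 1 2 \<subseteq> {A 1}" using d by (intro subset_trans[OF I[of 1 1 1 2]]) auto
  have i1120: "E 1 1 \<inter> E 2 0 \<subseteq> {}" using d by (intro subset_trans[OF I[of 1 1 2 0]]) auto
  have i1121: "E 1 1 \<inter> E 2 1 \<subseteq> {B 1}" using d by (intro subset_trans[OF I[of 1 1 2 1]]) auto
  have i1122: "E 1 1 \<inter> E 2 2 \<subseteq> {}" using d by (intro subset_trans[OF I[of 1 1 2 2]]) auto
  have i1220: "E 1 2 \<inter> E 2 0 \<subseteq> {}" using d by (intro subset_trans[OF I[of 1 2 2 0]]) auto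
  have i1221: "E 1 2 \<inter> E 2 1 \<subseteq> {}" using d by (intro subset_trans[OF I[of 1 2 2 1]]) auto
  have i1222: "E 1 2 \<inter> E 2 2 \<subseteq> {B 2}" using d by (intro subset_trans[OF I[of 1 2 2 2]]) auto
  have i2021: "E 2 0 \<inter> E 2 1 \<subseteq> {A 2}" using d by (intro subset_trans[OF I[of 2 0 2 1]]) auto
  have i2022: "E 2 0 \<inter> E 2 2 \<subseteq> {A 2}" using d by (intro subset_trans[OF I[of 2 0 2 2]]) auto
  have i2122: "E 2 1 \<inter> E 2 2 \<subseteq> {A 2}" using d by (intro subset_trans[OF I[of 2 1 2 2]]) auto
  have arcs: "arc (e i j)" "pathstart (e i j) = A i" "pathfinish (e i j) = B j" "A i \<in> E i j" "B j \<in> E i j"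
    if "i \<in> {0,1,2}" "j \<in> {0,1,2}" for i j using ar'[of i j] that by auto
  have rv: "arc (reversepath (e i j))" "pathstart (reversepath (e i j)) = B j"
     "pathfinish (reversepath (e i j)) = A i" "path_image (reversepath (e i j)) = E i j"
    if "i \<in> {0,1,2}" "j \<in> {0,1,2}" for i j using arcs[OF that] by (auto simp: arc_reversepath E_def)
  define P1 where "P1 = e 0 0 +++ (reversepath (e 1 0) +++ e 1 1)"
  define P2 where "P2 = e 0 2 +++ (reversepath (e 2 2) +++ e 2 1)"
  define Q1 where "Q1 = e 1 1 +++ (reversepath (e 2 1) +++ e 2 2)"
  define Q2 where "Q2 = e 1 0 +++ (reversepath (e 0 0) +++ e 0 2)"
  have hP1: "arc P1" "pathstart P1 = A 0" "pathfinish P1 = B 1" "path_image P1 = E 0 0 \<union> E 1 0 \<union> E 1 1"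
    using arc3[of "e 0 0" "reversepath (e 1 0)" "e 1 1"] i0010 i1011 i0011 arcs[of 0 0] arcs[of 1 0] arcs[of 1 1] rv[of 1 0]
    unfolding P1_def E_def by auto
  have hP2: "arc P2" "pathstart P2 = A 0" "pathfinish P2 = B 1" "path_image P2 = E 0 2 \<union> E 2 2 \<union> E 2 1"
    using arc3[of "e 0 2" "reversepath (e 2 2)" "e 2 1"] i0222 i2122 i0221 arcs[of 0 2] arcs[of 2 2] arcs[of 2 1] rv[of 2 2]
    unfolding P2_def E_def by auto
  have hQ1: "arc Q1" "pathstart Q1 = A 1" "pathfinish Q1 = B 2" "path_image Q1 = E 1 1 \<union> E 2 1 \<union> E 2 2"
    using arc3[of "e 1 1" "reversepath (e 2 1)" "e 2 2"] i1121 i2122 i1122 arcs[of 1 1] arcs[of 2 1] arcs[of 2 2] rv[of 2 1]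
    unfolding Q1_def E_def by auto
  have hQ2: "arc Q2" "pathstart Q2 = A 1" "pathfinish Q2 = B 2" "path_image Q2 = E 1 0 \<union> E 0 0 \<union> E 0 2"
    using arc3[of "e 1 0" "reversepath (e 0 0)" "e 0 2"] i0010 i0002 i0210 arcs[of 1 0] arcs[of 0 0] arcs[of 0 2] rv[of 0 0]
    unfolding Q2_def E_def by auto
  note arcs00 = arcs[of 0 0] and arcs01 = arcs[of 0 1] and arcs02 = arcs[of 0 2]
     and arcs10 = arcs[of 1 0] and arcs11 = arcs[of 1 1] and arcs12 = arcs[of 1 2]
     and arcs20 = arcs[of 2 0] and arcs21 = arcs[of 2 1] and arcs22 = arcs[of 2 2]
  note AR = arcs00 arcs01 arcs02 arcs10 arcs11 arcs12 arcs20 arcs21 arcs22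
  have th1: "theta P1 P2 (e 0 1) (A 0) (B 1)"
    unfolding theta_def using hP1 hP2 AR i0002 i0022 i0021 i0210 i1022 i1021 i0211 i1122 i1121 i0001 i0110 i0111 i0102 i0122 i0121 unfolding E_def by auto
  have th2: "theta Q1 Q2 (e 1 2) (A 1) (B 2)"
    unfolding theta_def using hQ1 hQ2 AR i1011 i0011 i0211 i1021 i0021 i0221 i1022 i0022 i0222 i1112 i1221 i1222 i1012 i0012 i0212 unfolding E_def by auto
  have JJ: "path_image Q1 \<union> path_image Q2 = path_image P1 \<union> path_image P2"
    using hP1 hP2 hQ1 hQ2 by auto
  have oD: "connected (oi (e i j))" "oi (e i j) \<noteq> {}" "A i \<in> closure (oi (e i j))" "B j \<in> closure (oi (e i j))"
     "oi (e i j) = E i j - {A i, B j}"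
    if "i \<in> {0,1,2}" "j \<in> {0,1,2}" for i j
    using oi_facts[of "e i j"] arcs[OF that] unfolding oi_def E_def by auto
  have m: "(0::nat) \<in> {0,1,2}" "(1::nat) \<in> {0,1,2}" "(2::nat) \<in> {0,1,2}" by auto
  note oD12 = oD[OF m(2) m(3)] and oD20 = oD[OF m(3) m(1)] and oD01 = oD[OF m(1) m(2)]
  have c1: "(oi (e 0 1) \<subseteq> inside (path_image P1 \<union> path_image P2) \<and> oi (e 1 2) \<subseteq> outside (path_image P1 \<union> path_image P2)) \<or>
         (oi (e 0 1) \<subseteq> outside (path_image P1 \<union> path_image P2) \<and> oi (e 1 2) \<subseteq> inside (path_image P1 \<union> path_image P2))"
  proof (rule crossing[OF th1 oD12(1) _ oD12(3) _ oD12(4)])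
    show "oi (e 1 2) \<inter> (path_image P1 \<union> path_image P2 \<union> path_image (e 0 1)) = {}"
      unfolding oD12(5) hP1 hP2 E_def[symmetric] using i0012 i1012 i1112 i0212 i1222 i1221 i0112 by blast
    show "A 1 \<in> oi P1" unfolding oi_def hP1 using AR d by auto
    show "B 2 \<in> oi P2" unfolding oi_def hP2 using AR d by auto
  qed
  have c2: "(oi (e 0 1) \<subseteq> inside (path_image P1 \<union> path_image P2) \<and> oi (e 2 0) \<subseteq> outside (path_image P1 \<union> path_image P2)) \<or>
         (oi (e 0 1) \<subseteq> outside (path_image P1 \<union> path_image P2) \<and> oi (e 2 0) \<subseteq> inside (path_image P1 \<union> path_image P2))"
  proof (rule crossing[OF th1 oD20(1) _ oD20(4) _ oD20(3)])
    show "oi (e 2 0) \<inter> (path_image P1 \<union> path_image P2 \<union> path_image (e 0 1)) = {}"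
      unfolding oD20(5) hP1 hP2 E_def[symmetric] using i0020 i1020 i1120 i0220 i2022 i2021 i0120 by blast
    show "B 0 \<in> oi P1" unfolding oi_def hP1 using AR d by auto
    show "A 2 \<in> oi P2" unfolding oi_def hP2 using AR d by auto
  qed
  have c3: "(oi (e 1 2) \<subseteq> inside (path_image Q1 \<union> path_image Q2) \<and> oi (e 0 1) \<subseteq> outside (path_image Q1 \<union> path_image Q2)) \<or>
         (oi (e 1 2) \<subseteq> outside (path_image Q1 \<union> path_image Q2) \<and> oi (e 0 1) \<subseteq> inside (path_image Q1 \<union> path_image Q2))"
  proof (rule crossing[OF th2 oD01(1) _ oD01(4) _ oD01(3)])
    show "oi (e 0 1) \<inter> (path_image Q1 \<union> path_image Q2 \<union> path_image (e 1 2)) = {}"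
      unfolding oD01(5) hQ1 hQ2 E_def[symmetric] using i0111 i0121 i0122 i0110 i0001 i0102 i0112 by blast
    show "B 1 \<in> oi Q1" unfolding oi_def hQ1 using AR d by auto
    show "A 0 \<in> oi Q2" unfolding oi_def hQ2 using AR d by auto
  qed
  have c4: "(oi (e 1 2) \<subseteq> inside (path_image Q1 \<union> path_image Q2) \<and> oi (e 2 0) \<subseteq> outside (path_image Q1 \<union> path_image Q2)) \<or>
         (oi (e 1 2) \<subseteq> outside (path_image Q1 \<union> path_image Q2) \<and> oi (e 2 0) \<subseteq> inside (path_image Q1 \<union> path_image Q2))"
  proof (rule crossing[OF th2 oD20(1) _ oD20(3) _ oD20(4)])
    show "oi (e 2 0) \<inter> (path_image Q1 \<union> path_image Q2 \<union> path_image (e 1 2)) = {}"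
      unfolding oD20(5) hQ1 hQ2 E_def[symmetric] using i1120 i2021 i2022 i1020 i0020 i0220 i1220 by blast
    show "A 2 \<in> oi Q1" unfolding oi_def hQ1 using AR d by auto
    show "B 0 \<in> oi Q2" unfolding oi_def hQ2 using AR d by auto
  qed
  have io: "inside S \<inter> outside S = {}" for S :: "complex set" by simp
  show False using c1 c2 c3[unfolded JJ] c4[unfolded JJ] oD12(2) oD20(2) oD01(2)
    io[of "path_image P1 \<union> path_image P2"] by blast
qed



  define V where "V = gamma2_vertices R n I"
  define w where "w k = vecS R n (LL ! k)" for k
  have wV: "w k \<in> V" if k6: "k < 6" for k
  proof -
    obtain x y where "x \<in> LL ! k" "x < 4" "y < 4" "y \<notin> LL ! k" using LL_vert[OF k6] by blast
    then show ?thesis unfolding w_def V_def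
      using vecS_vertex[where k=x and S="LL ! k" and j=y] assms(1) by auto
  qed
  have wE: "gamma2_adj R n I (w k) (w l)" if kl: "k < 6" "l < 6" "k \<noteq> l" for k l
  proof -
    obtain x y where "x \<in> LL ! k" "x \<notin> LL ! l" "x < 4" "y \<in> LL ! l" "y \<notin> LL ! k" "y < 4"
      using LL_facts[OF kl] by blast
    then show ?thesis unfolding w_def
      using vecS_adj[where k=x and S="LL ! k" and T="LL ! l" and j=y] assms(1) by auto
  qed
  have wne: "w k \<noteq> w l" if "k < 6" "l < 6" "k \<noteq> l" for k l
    using wE[OF that] unfolding gamma2_adj_def by blast
  obtain p :: "_ \<Rightarrow> complex" and c where inj: "inj_on p V"
    and ed: "\<And>u v. u \<in> V \<Longrightarrow> v \<in> V \<Longrightarrow> gamma2_adj R n I u v \<Longrightarrow>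
            arc (c u v) \<and> pathstart (c u v) = p u \<and> pathfinish (c u v) = p v"
    and cr: "\<And>u v x y. u \<in> V \<Longrightarrow> v \<in> V \<Longrightarrow> x \<in> V \<Longrightarrow> y \<in> V \<Longrightarrow>
            gamma2_adj R n I u v \<Longrightarrow> gamma2_adj R n I x y \<Longrightarrow> {u, v} \<noteq> {x, y} \<Longrightarrow>
            path_image (c u v) \<inter> path_image (c x y) \<subseteq> {p u, p v} \<inter> {p x, p y}"
    using pl unfolding planar_graph_def V_def[symmetric] by metis
  have pne: "p (w k) \<noteq> p (w l)" if "k < 6" "l < 6" "k \<noteq> l" for k l
    using inj wV[OF that(1)] wV[OF that(2)] wne[OF that] by (metis inj_onD)
  show False
  proof (rule K33[where A="\<lambda>i. p (w i)" and B="\<lambda>j. p (w (3+j))" and e="\<lambda>i j. c (w i) (w (3+j))"])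
    show "distinct [p (w 0), p (w 1), p (w 2), p (w (3 + 0)), p (w (3 + 1)), p (w (3 + 2))]"
    proof -
    have "p (w 0) \<noteq> p (w 1)" using pne[of 0 1] by simp
    moreover have "p (w 0) \<noteq> p (w 2)" using pne[of 0 2] by simp
    moreover have "p (w 0) \<noteq> p (w 3)" using pne[of 0 3] by simp
    moreover have "p (w 0) \<noteq> p (w 4)" using pne[of 0 4] by simp
    moreover have "p (w 0) \<noteq> p (w 5)" using pne[of 0 5] by simp
    moreover have "p (w 1) \<noteq> p (w 2)" using pne[of 1 2] by simp
    moreover have "p (w 1) \<noteq> p (w 3)" using pne[of 1 3] by simp
    moreover have "p (w 1) \<noteq> p (w 4)" using pne[of 1 4] by simp
    moreover have "p (w 1) \<noteq> p (w 5)" using pne[of 1 5] by simp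
    moreover have "p (w 2) \<noteq> p (w 3)" using pne[of 2 3] by simp
    moreover have "p (w 2) \<noteq> p (w 4)" using pne[of 2 4] by simp
    moreover have "p (w 2) \<noteq> p (w 5)" using pne[of 2 5] by simp
    moreover have "p (w 3) \<noteq> p (w 4)" using pne[of 3 4] by simp
    moreover have "p (w 3) \<noteq> p (w 5)" using pne[of 3 5] by simp
    moreover have "p (w 4) \<noteq> p (w 5)" using pne[of 4 5] by simp
      ultimately show ?thesis by simp
    qed
  next
    fix i j :: nat assume "i < 3" "j < 3"
    then show "arc (c (w i) (w (3 + j))) \<and> pathstart (c (w i) (w (3 + j))) = p (w i) \<and>
          pathfinish (c (w i) (w (3 + j))) = p (w (3 + j))"
      using ed[of "w i" "w (3+j)"] wV[of i] wV[of "3+j"] wE[of i "3+j"] by simp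
  next
    fix i j k l :: nat assume a: "i < 3" "j < 3" "k < 3" "l < 3" "(i, j) \<noteq> (k, l)"
    have "{w i, w (3+j)} \<noteq> {w k, w (3+l)}"
    proof
      assume eq: "{w i, w (3+j)} = {w k, w (3+l)}"
      have "w i \<noteq> w (3+l)" using a wne[of i "3+l"] by simp
      moreover have "w (3+j) \<noteq> w k" using a wne[of "3+j" k] by simp
      ultimately have e1: "w i = w k" and e2: "w (3+j) = w (3+l)" using eq by blast+
      have "i = k" using e1 a wne[of i k] by (cases "i = k") simp_all
      moreover have "j = l" using e2 a wne[of "3+j" "3+l"] by (cases "j = l") simp_all
      ultimately show False using a by simp
    qed
    then show "path_image (c (w i) (w (3 + j))) \<inter> path_image (c (w k) (w (3 + l))) \<subseteq> {p (w i), p (w (3 + j))} \<inter> {p (w k), p (w (3 + l))}"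
      using cr[of "w i" "w (3+j)" "w k" "w (3+l)"] wV[of i] wV[of "3+j"] wV[of k] wV[of "3+l"]
        wE[of i "3+j"] wE[of k "3+l"] a by simp
  qed
qed

end
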